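(* Let $(V_1,V_2)$ be a pair of commuting isometries on a Hilbert space $\mathcal H$ with $\operatorname{ran}V_1=\operatorname{ran}V_2$. Then there exist Hilbert spaces $\mathcal L$ and $\mathcal K$ such that, up to unitary equivalence, $\mathcal H=(H^2_{\mathbb D}\otimes\mathcal L)\oplus\mathcal K$ and in this decomposition $$V_1=\begin{pmatrix}M_z\otimes I_{\mathcal L}&0\\0&W_1\end{pmatrix},\qquad V_2=\begin{pmatrix}M_z\otimes W&0\\0&W_2\end{pmatrix}$$ for some unitary $W$ on $\mathcal L$ and commuting unitaries $W_1,W_2$ on $\mathcal K$.
   Context: $H^2_{\mathbb D}$ is the Hardy space of the unit disc and $M_z$ is multiplication by $z$ on it. The condition $\operatorname{ran}V_1=\operatorname{ran}V_2$ is equivalent (for commuting isometries) to the defect operator $I-V_1V_1^*-V_2V_2^*+V_1V_2V_2^*V_1^*$ being a difference of two mutually orthogonal projections whose ranges sum to $\ker(V_1V_2)^*$. *)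

theory Defs
  imports "HOL-Analysis.Analysis"
begin

text \<open>A complex Hilbert space is modelled as a real Hilbert space (type class
  real_inner + complete_space) together with an orthogonal complex structure J
  (multiplication by the imaginary unit).  Complex-linear maps are the real-linear
  maps commuting with J.\<close>

definition cstruct :: "('h::real_inner \<Rightarrow> 'h) \<Rightarrow> bool" where
  "cstruct J \<longleftrightarrow> linear J \<and> (\<forall>x. J (J x) = - x) \<and> (\<forall>x. norm (J x) = norm x)"

definition c_isometry :: "('h::real_inner \<Rightarrow> 'h) \<Rightarrow> ('h \<Rightarrow> 'h) \<Rightarrow> bool" where
  "c_isometry J V \<longleftrightarrow> linear V \<and> (\<forall>x. V (J x) = J (V x)) \<and> (\<forall>x. norm (V x) = norm x)"

text \<open>Closed complex subspace (used as carrier of an auxiliary Hilbert space).\<close>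
definition csubspace :: "('h::real_inner \<Rightarrow> 'h) \<Rightarrow> 'h set \<Rightarrow> bool" where
  "csubspace J S \<longleftrightarrow> subspace S \<and> closed S \<and> (\<forall>x\<in>S. J x \<in> S)"

definition unitary_on :: "('h::real_inner \<Rightarrow> 'h) \<Rightarrow> 'h set \<Rightarrow> ('h \<Rightarrow> 'h) \<Rightarrow> bool" where
  "unitary_on J S W \<longleftrightarrow>
     (\<forall>x\<in>S. \<forall>y\<in>S. W (x + y) = W x + W y) \<and>
     (\<forall>c x. x \<in> S \<longrightarrow> W (c *\<^sub>R x) = c *\<^sub>R W x) \<and>
     (\<forall>x\<in>S. W (J x) = J (W x)) \<and>
     (\<forall>x\<in>S. norm (W x) = norm x) \<and>
     W ` S = S"

text \<open>The vector-valued Hardy space H^2 (tensor) L, realised via Taylor coefficients: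
  f = sum_n z^n (tensor) f_n with f_n in L and sum_n norm(f_n)^2 finite.\<close>
definition hardy :: "'h::real_normed_vector set \<Rightarrow> (nat \<Rightarrow> 'h) set" where
  "hardy L = {f. (\<forall>n. f n \<in> L) \<and> summable (\<lambda>n. (norm (f n))\<^sup>2)}"

text \<open>The operator M_z (tensor) W on coefficient sequences.\<close>
definition tshift :: "('h::zero \<Rightarrow> 'h) \<Rightarrow> (nat \<Rightarrow> 'h) \<Rightarrow> (nat \<Rightarrow> 'h)" where
  "tshift W f = (\<lambda>n. case n of 0 \<Rightarrow> 0 | Suc m \<Rightarrow> W (f m))"

definition unitary_onto :: "('h::real_inner \<Rightarrow> 'h) \<Rightarrow> 'h set \<Rightarrow> 'h set
     \<Rightarrow> ('h \<Rightarrow> (nat \<Rightarrow> 'h) \<times> 'h) \<Rightarrow> bool" where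
  "unitary_onto J L K U \<longleftrightarrow>
     (\<forall>n. linear (\<lambda>x. fst (U x) n)) \<and> linear (\<lambda>x. snd (U x)) \<and>
     (\<forall>x. U (J x) = ((\<lambda>n. J (fst (U x) n)), J (snd (U x)))) \<and>
     (\<forall>x. (norm x)\<^sup>2 = (\<Sum>n. (norm (fst (U x) n))\<^sup>2) + (norm (snd (U x)))\<^sup>2) \<and>
     range U = hardy L \<times> K"

end

theory Submission
  imports Defs
begin


lemma inner_ext:
  fixes a b :: "'h::real_inner"
  assumes "\<And>x. a \<bullet> x = b \<bullet> x" shows "a = b"
proof -
  have "(a - b) \<bullet> (a - b) = 0" using assms[of "a-b"] by (simp add: inner_diff_left)
  then show ?thesis by simp
qed

lemma infdist_approx:
  assumes "A \<noteq> {}" "e > 0"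
  shows "\<exists>a\<in>A. dist x a < infdist x A + e"
proof (rule ccontr)
  assume "\<not> ?thesis"
  then have "\<forall>a\<in>A. infdist x A + e \<le> dist x a" by auto
  then have "infdist x A + e \<le> infdist x A"
    unfolding infdist_notempty[OF assms(1)] by (intro cINF_greatest) (use assms in auto)
  then show False using assms by simp
qed

lemma proj_exists:
  fixes S :: "'h::{real_inner,complete_space} set"
  assumes sub: "subspace S" and cl: "closed S"
  shows "\<exists>p\<in>S. \<forall>s\<in>S. (x - p) \<bullet> s = 0"
proof -
  have ne: "S \<noteq> {}" using subspace_0[OF sub] by auto
  define d where "d = infdist x S"
  have d0: "d \<ge> 0" unfolding d_def by (rule infdist_nonneg)
  have dle: "d \<le> norm (x - s)" if "s \<in> S" for s
    using infdist_le[OF that, of x] by (simp add: d_def dist_norm)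
  have "\<exists>s\<in>S. (norm (x - s))\<^sup>2 < d\<^sup>2 + 1 / real (Suc n)" for n
  proof -
    define e where "e = sqrt (d\<^sup>2 + 1 / real (Suc n)) - d"
    have "d < sqrt (d\<^sup>2 + 1 / real (Suc n))"
      using d0 by (metis add_pos_pos less_add_same_cancel1 of_nat_0_less_iff real_less_rsqrt zero_less_Suc zero_less_divide_1_iff
          power2_less_imp_less real_sqrt_abs real_sqrt_less_iff abs_of_nonneg)
    then have "e > 0" by (simp add: e_def)
    then obtain s where s: "s \<in> S" "dist x s < d + e" using infdist_approx[OF ne] d_def by blast
    then have "norm (x - s) < sqrt (d\<^sup>2 + 1 / real (Suc n))" by (simp add: e_def dist_norm)
    then have "(norm (x - s))\<^sup>2 < d\<^sup>2 + 1 / real (Suc n)"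
      by (metis norm_ge_zero real_sqrt_less_iff real_sqrt_abs abs_of_nonneg power2_less_imp_less real_less_rsqrt)
    with s show ?thesis by blast
  qed
  then obtain s where s: "\<And>n. s n \<in> S" "\<And>n. (norm (x - s n))\<^sup>2 < d\<^sup>2 + 1 / real (Suc n)"
    by metis
  have par: "(norm (s m - s n))\<^sup>2 \<le> 2 / real (Suc m) + 2 / real (Suc n)" for m n
  proof -
    have mid: "(1/2) *\<^sub>R (s m + s n) \<in> S"
      using s(1) sub by (simp add: subspace_add subspace_scale)
    have "d\<^sup>2 \<le> (norm (x - (1/2) *\<^sub>R (s m + s n)))\<^sup>2"
      using dle[OF mid] d0 by (simp add: power_mono)
    moreover have "(norm (s m - s n))\<^sup>2 = 2 * (norm (x - s m))\<^sup>2 + 2 * (norm (x - s n))\<^sup>2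
        - 4 * (norm (x - (1/2) *\<^sub>R (s m + s n)))\<^sup>2"
      by (simp add: power2_norm_eq_inner inner_diff_left inner_diff_right inner_add_left inner_add_right
          inner_commute algebra_simps)
    ultimately show ?thesis using s(2)[of m] s(2)[of n] by linarith
  qed
  have "Cauchy s"
  proof (rule metric_CauchyI)
    fix e :: real assume "e > 0"
    obtain M :: nat where M: "4 / (e\<^sup>2) < real M"
      using reals_Archimedean2 by blast
    have "dist (s m) (s n) < e" if "m \<ge> M" "n \<ge> M" for m n
    proof -
      have "2 / real (Suc m) \<le> 2 / real (Suc M)" "2 / real (Suc n) \<le> 2 / real (Suc M)"
        using that by (auto intro!: divide_left_mono)
      moreover have "4 / real (Suc M) < e\<^sup>2"
      proof -
        have "4 / e\<^sup>2 < real (Suc M)" using M by simp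
        then show ?thesis using \<open>e>0\<close> by (simp add: field_simps)
      qed
      ultimately have "(dist (s m) (s n))\<^sup>2 < e\<^sup>2" using par[of m n] by (simp add: dist_norm)
      then show ?thesis using \<open>e > 0\<close> by (simp add: power_less_imp_less_base)
    qed
    then show "\<exists>M. \<forall>m\<ge>M. \<forall>n\<ge>M. dist (s m) (s n) < e" by blast
  qed
  then obtain p where p: "s \<longlonglongrightarrow> p" using Cauchy_convergent_iff convergent_def by blast
  have pS: "p \<in> S" using closed_sequentially[OF cl] s(1) p by blast
  have lim1: "(\<lambda>n. (norm (x - s n))\<^sup>2) \<longlonglongrightarrow> (norm (x - p))\<^sup>2"
    by (intro tendsto_intros p)
  have lim2: "(\<lambda>n. d\<^sup>2 + 1 / real (Suc n)) \<longlonglongrightarrow> d\<^sup>2 + 0"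
    by (intro tendsto_intros LIMSEQ_inverse_real_of_nat[unfolded inverse_eq_divide])
  have pmin: "(norm (x - p))\<^sup>2 \<le> d\<^sup>2"
    using LIMSEQ_le[OF lim1 lim2] s(2) less_imp_le by auto
  have orth: "(x - p) \<bullet> t = 0" if t: "t \<in> S" for t
  proof (cases "t = 0")
    case True then show ?thesis by simp
  next
    case False
    define c where "c = (x - p) \<bullet> t"
    define r where "r = c / (t \<bullet> t)"
    have tt: "t \<bullet> t > 0" using False by simp
    have "p + r *\<^sub>R t \<in> S" using sub pS t by (simp add: subspace_add subspace_scale)
    then have "d\<^sup>2 \<le> (norm (x - (p + r *\<^sub>R t)))\<^sup>2" using dle d0 by (simp add: power_mono)
    also have "(norm (x - (p + r *\<^sub>R t)))\<^sup>2 = (norm (x - p))\<^sup>2 - 2 * r * c + r * r * (t \<bullet> t)"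
      by (simp add: power2_norm_eq_inner inner_diff_left inner_diff_right inner_add_left inner_add_right
          inner_commute algebra_simps c_def)
    also have "\<dots> = (norm (x - p))\<^sup>2 - c * c / (t \<bullet> t)"
      using tt by (simp add: r_def field_simps power2_eq_square)
    finally have "c * c / (t \<bullet> t) \<le> 0" using pmin by linarith
    then have "c * c \<le> 0" using tt by (simp add: divide_le_0_iff)
    then have "c * c = 0" using zero_le_square[of c] by linarith
    then show ?thesis by (simp add: c_def)
  qed
  show ?thesis using pS orth by blast
qed

lemma isom_inner:
  fixes f :: "'h::real_inner \<Rightarrow> 'h"
  assumes "linear f" "\<And>x. norm (f x) = norm x"
  shows "f x \<bullet> f y = x \<bullet> y"
proof -
  have "f x \<bullet> f y = ((norm (f (x + y)))\<^sup>2 - (norm (f x))\<^sup>2 - (norm (f y))\<^sup>2) / 2"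
    unfolding dot_norm linear_add[OF assms(1)] ..
  also have "\<dots> = x \<bullet> y" unfolding assms(2) dot_norm[of x y] ..
  finally show ?thesis .
qed

lemma isom_bl:
  fixes f :: "'h::real_normed_vector \<Rightarrow> 'h"
  assumes "linear f" "\<And>x. norm (f x) = norm x"
  shows "bounded_linear f"
  by (rule bounded_linear_intro[where K=1]) (auto simp: linear_add[OF assms(1)] linear_scale[OF assms(1)] assms(2))

lemma isom_inj:
  fixes f :: "'h::real_normed_vector \<Rightarrow> 'h"
  assumes "linear f" "\<And>x. norm (f x) = norm x" "f x = f y"
  shows "x = y"
proof -
  have "norm (f (x - y)) = 0" using assms by (simp add: linear_diff)
  then show ?thesis using assms(2) by simp
qed

lemma isom_closed_range:
  fixes f :: "'h::{real_normed_vector,complete_space} \<Rightarrow> 'h"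
  assumes lf: "linear f" and nf: "\<And>x. norm (f x) = norm x"
  shows "closed (range f)"
  unfolding closed_sequential_limits
proof safe
  fix y and g :: "nat \<Rightarrow> 'h"
  assume "\<forall>n. g n \<in> range f" "g \<longlonglongrightarrow> y"
  then have "\<forall>n. \<exists>w. g n = f w" and gl: "g \<longlonglongrightarrow> y" by auto
  then obtain z where z: "\<And>n. g n = f (z n)" by metis
  have dz: "dist (z m) (z n) = dist (g m) (g n)" for m n
    using nf[of "z m - z n"] by (simp add: z dist_norm linear_diff[OF lf])
  have "Cauchy g" using gl by (rule LIMSEQ_imp_Cauchy)
  then have "Cauchy z" unfolding Cauchy_def dz .
  then obtain w where w: "z \<longlonglongrightarrow> w" using Cauchy_convergent_iff convergent_def by blast
  have "(\<lambda>n. f (z n)) \<longlonglongrightarrow> f w"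
    using isom_bl[OF lf nf] w by (rule bounded_linear.tendsto)
  moreover have "(\<lambda>n. f (z n)) = g" using z by auto
  ultimately have "y = f w" using gl LIMSEQ_unique by metis
  then show "y \<in> range f" by simp
qed

lemma isom_funpow:
  fixes f :: "'h::real_normed_vector \<Rightarrow> 'h"
  assumes lf: "linear f" and nf: "\<And>x. norm (f x) = norm x"
  shows "linear (f ^^ n)" "norm ((f ^^ n) x) = norm x"
proof -
  show "linear (f ^^ n)"
  proof (induction n)
    case 0 show ?case by (simp add: linear_iff)
  next
    case (Suc n) then show ?case using linear_compose[OF Suc lf] by (simp add: o_def)
  qed
  show "norm ((f ^^ n) x) = norm x"
    by (induction n arbitrary: x) (auto simp: nf)
qed



locale isom =
  fixes V :: "'h::{real_inner,complete_space} \<Rightarrow> 'h"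
  assumes lin: "linear V" and nrm: "\<And>x. norm (V x) = norm x"
begin

lemma Vn_lin: "linear (V ^^ n)" using isom_funpow[OF lin nrm] by blast
lemma Vn_nrm: "norm ((V ^^ n) x) = norm x" using isom_funpow[OF lin nrm] by blast
lemma Vn_inner: "(V ^^ n) x \<bullet> (V ^^ n) y = x \<bullet> y" using isom_inner[OF Vn_lin Vn_nrm] .
lemma V_inner: "V x \<bullet> V y = x \<bullet> y" using isom_inner[OF lin nrm] .
lemma V_inj: "V x = V y \<Longrightarrow> x = y" using isom_inj[OF lin nrm] .
lemma Vn_inj: "(V ^^ n) x = (V ^^ n) y \<Longrightarrow> x = y" using isom_inj[OF Vn_lin Vn_nrm] .
lemma V_bl: "bounded_linear V" using isom_bl[OF lin nrm] .
lemma Vn_bl: "bounded_linear (V ^^ n)" using isom_bl[OF Vn_lin Vn_nrm] .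

lemma adj_ex: "\<exists>a. \<forall>x. a \<bullet> x = y \<bullet> V x"
proof -
  have "subspace (range V)" using lin by (simp add: linear_subspace_image)
  then obtain p where p: "p \<in> range V" "\<forall>s\<in>range V. (y - p) \<bullet> s = 0"
    using proj_exists[OF _ isom_closed_range[OF lin nrm]] by blast
  then obtain a where a: "p = V a" by auto
  have "a \<bullet> x = y \<bullet> V x" for x
  proof -
    have "(y - p) \<bullet> V x = 0" using p by auto
    then have "y \<bullet> V x = p \<bullet> V x" by (simp add: inner_diff_left)
    then show ?thesis by (simp add: a V_inner)
  qed
  then show ?thesis by blast
qed

definition adj where "adj y = (SOME a. \<forall>x. a \<bullet> x = y \<bullet> V x)"

lemma adjI: "adj y \<bullet> x = y \<bullet> V x"
  unfolding adj_def using someI_ex[OF adj_ex[of y]] by blast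

lemma adj_lin: "linear adj"
proof (rule linearI)
  fix b1 b2 show "adj (b1 + b2) = adj b1 + adj b2"
    by (rule inner_ext) (simp add: adjI inner_add_left)
next
  fix r b show "adj (r *\<^sub>R b) = r *\<^sub>R adj b"
    by (rule inner_ext) (simp add: adjI)
qed

lemma adj_V: "adj (V x) = x"
  by (rule inner_ext) (simp add: adjI V_inner)

lemma adj_0: "adj 0 = 0" using linear_0[OF adj_lin] .

definition P where "P y = y - V (adj y)"

lemma adj_P: "adj (P y) = 0"
  by (simp add: P_def linear_diff[OF adj_lin] adj_V)

lemma P_V: "P (V y) = 0"
  by (simp add: P_def adj_V)


lemma adj_pyth: "(norm y)\<^sup>2 = (norm (adj y))\<^sup>2 + (norm (P y))\<^sup>2"
proof -
  have yv: "y \<bullet> V (adj y) = adj y \<bullet> adj y" by (simp add: adjI)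
  have o: "P y \<bullet> V (adj y) = 0"
    by (simp add: P_def inner_diff_left yv V_inner)
  have "y = V (adj y) + P y" by (simp add: P_def)
  then have "(norm y)\<^sup>2 = (norm (V (adj y) + P y))\<^sup>2" by simp
  also have "\<dots> = (norm (V (adj y)))\<^sup>2 + (norm (P y))\<^sup>2"
    using o by (intro norm_add_Pythagorean) (simp add: orthogonal_def inner_commute)
  finally show ?thesis by (simp add: nrm)
qed

lemma adj_norm: "norm (adj y) \<le> norm y"
  using adj_pyth[of y] by (metis le_add_same_cancel1 norm_ge_zero power2_le_imp_le zero_le_power2)

lemma adj_bl: "bounded_linear adj"
  by (rule bounded_linear_intro[where K=1]) (auto simp: linear_add[OF adj_lin] linear_scale[OF adj_lin] adj_norm)

lemma P_bl: "bounded_linear P"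
  unfolding P_def[abs_def]
  by (intro bounded_linear_sub bounded_linear_ident bounded_linear_compose[OF V_bl adj_bl])

lemma P_lin: "linear P" using P_bl bounded_linear.linear by blast

lemma An_lin: "linear (adj ^^ n)"
proof (induction n)
  case 0 show ?case by (simp add: linear_iff)
next
  case (Suc n) then show ?case using linear_compose[OF Suc adj_lin] by (simp add: o_def)
qed

lemma An_norm: "norm ((adj ^^ n) y) \<le> norm y"
  by (induction n arbitrary: y) (auto intro: order_trans[OF adj_norm])

lemma An_bl: "bounded_linear (adj ^^ n)"
  by (rule bounded_linear_intro[where K=1]) (auto simp: linear_add[OF An_lin] linear_scale[OF An_lin] An_norm)

lemma An_0: "(adj ^^ n) 0 = 0" using linear_0[OF An_lin] .

lemma An_Suc: "(adj ^^ Suc n) y = (adj ^^ n) (adj y)" by (simp only: funpow_Suc_right comp_apply)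

lemma An_adj: "(adj ^^ n) y \<bullet> x = y \<bullet> (V ^^ n) x"
proof (induction n arbitrary: y)
  case 0 then show ?case by simp
next
  case (Suc n)
  show ?case unfolding An_Suc using Suc by (simp add: adjI)
qed

lemma An_Vn: "(adj ^^ n) ((V ^^ n) x) = x"
  by (rule inner_ext) (simp add: An_adj Vn_inner)

lemma An_Vn_le: "m \<le> n \<Longrightarrow> (adj ^^ m) ((V ^^ n) x) = (V ^^ (n - m)) x"
proof -
  assume "m \<le> n"
  then obtain k where n: "n = m + k" by (metis le_add_diff_inverse)
  have "(V ^^ n) x = (V ^^ m) ((V ^^ k) x)" by (simp add: n funpow_add)
  then show ?thesis by (simp add: An_Vn n)
qed

lemma An_Vn_ge: "n \<le> m \<Longrightarrow> (adj ^^ m) ((V ^^ n) x) = (adj ^^ (m - n)) x"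
proof -
  assume "n \<le> m"
  then obtain k where m: "m = k + n" by (metis le_add_diff_inverse2)
  have "(adj ^^ m) ((V ^^ n) x) = (adj ^^ k) ((adj ^^ n) ((V ^^ n) x))" by (simp add: m funpow_add)
  then show ?thesis by (simp add: An_Vn m)
qed


lemma An_ker: "adj l = 0 \<Longrightarrow> (adj ^^ Suc n) l = 0"
  by (simp only: An_Suc An_0)

definition Q where "Q n y = (V ^^ n) ((adj ^^ n) y)"

lemma Q_bl: "bounded_linear (Q n)"
  unfolding Q_def[abs_def] by (rule bounded_linear_compose[OF Vn_bl An_bl])

lemma Q_fix: "Q n ((V ^^ n) x) = (V ^^ n) x" by (simp add: Q_def An_Vn)

lemma Q_norm: "norm (Q n y) = norm ((adj ^^ n) y)" by (simp add: Q_def Vn_nrm)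

lemma a_step: "(norm ((adj ^^ N) x))\<^sup>2 = (norm ((adj ^^ Suc N) x))\<^sup>2 + (norm (P ((adj ^^ N) x)))\<^sup>2"
  using adj_pyth[of "(adj ^^ N) x"] by simp

lemma a_dec: "decseq (\<lambda>N. (norm ((adj ^^ N) x))\<^sup>2)"
  by (rule decseq_SucI) (simp add: a_step[of _ x])

lemma Q_diff: assumes "N \<le> M"
  shows "(norm (Q N x - Q M x))\<^sup>2 = (norm ((adj ^^ N) x))\<^sup>2 - (norm ((adj ^^ M) x))\<^sup>2"
proof -
  obtain k where M: "M = k + N" using assms by (metis le_add_diff_inverse2)
  have AM: "(adj ^^ M) x = (adj ^^ k) ((adj ^^ N) x)" by (simp add: M funpow_add)
  have VM: "(V ^^ M) z = (V ^^ N) ((V ^^ k) z)" for z by (simp add: M funpow_add add.commute)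
  have uw: "Q N x \<bullet> Q M x = Q M x \<bullet> Q M x"
  proof -
    have "Q N x \<bullet> Q M x = (adj ^^ N) x \<bullet> (V ^^ k) ((adj ^^ M) x)"
      by (simp add: Q_def VM Vn_inner)
    also have "\<dots> = (adj ^^ M) x \<bullet> (adj ^^ M) x"
      by (simp add: An_adj[symmetric] AM)
    also have "\<dots> = Q M x \<bullet> Q M x" by (simp add: Q_def Vn_inner)
    finally show ?thesis .
  qed
  have "(norm (Q N x - Q M x))\<^sup>2 = Q N x \<bullet> Q N x - 2 * (Q N x \<bullet> Q M x) + Q M x \<bullet> Q M x"
    by (simp add: power2_norm_eq_inner inner_diff_left inner_diff_right inner_commute)
  also have "\<dots> = (norm (Q N x))\<^sup>2 - (norm (Q M x))\<^sup>2"
    by (simp add: uw power2_norm_eq_inner)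
  finally show ?thesis by (simp add: Q_norm)
qed

lemma a_conv: "\<exists>c. (\<lambda>N. (norm ((adj ^^ N) x))\<^sup>2) \<longlonglongrightarrow> c"
proof -
  obtain c where "(\<lambda>N. (norm ((adj ^^ N) x))\<^sup>2) \<longlonglongrightarrow> c"
    using decseq_convergent[OF a_dec[of x], of 0] by auto
  then show ?thesis by blast
qed

lemma Q_conv: "convergent (\<lambda>N. Q N x)"
proof -
  define a where "a N = (norm ((adj ^^ N) x))\<^sup>2" for N
  have "convergent a" using a_conv unfolding a_def convergent_def by blast
  then have ca: "Cauchy a" by (rule convergent_Cauchy)
  have "Cauchy (\<lambda>N. Q N x)"
  proof (rule metric_CauchyI)
    fix e :: real assume e: "e > 0"
    then obtain M where M: "\<forall>m\<ge>M. \<forall>n\<ge>M. dist (a m) (a n) < e\<^sup>2"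
      using metric_CauchyD[OF ca, of "e\<^sup>2"] by auto
    have "dist (Q m x) (Q n x) < e" if "m \<ge> M" "n \<ge> M" for m n
    proof -
      have "(dist (Q m x) (Q n x))\<^sup>2 \<le> dist (a m) (a n)"
      proof (cases "m \<le> n")
        case True then show ?thesis using Q_diff[OF True, of x] by (simp add: dist_norm a_def)
      next
        case False then have nm: "n \<le> m" by simp
        show ?thesis using Q_diff[OF nm, of x] by (simp add: dist_norm a_def norm_minus_commute dist_commute)
      qed
      then have "(dist (Q m x) (Q n x))\<^sup>2 < e\<^sup>2" using M that by fastforce
      then show ?thesis using e by (simp add: power_less_imp_less_base)
    qed
    then show "\<exists>M. \<forall>m\<ge>M. \<forall>n\<ge>M. dist (Q m x) (Q n x) < e" by blast
  qed
  then show ?thesis using Cauchy_convergent_iff by blast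
qed

definition PK where "PK x = lim (\<lambda>N. Q N x)"

lemma PK_lim: "(\<lambda>N. Q N x) \<longlonglongrightarrow> PK x"
  unfolding PK_def using Q_conv convergent_LIMSEQ_iff by blast

end


context isom begin

definition K where "K = (\<Inter>n. range (V ^^ n))"

lemma Q_lin: "linear (Q N)" using Q_bl bounded_linear.linear by blast
lemma Q_add: "Q N (x + y) = Q N x + Q N y" using linear_add[OF Q_lin] .
lemma Q_scale: "Q N (r *\<^sub>R x) = r *\<^sub>R Q N x" using linear_scale[OF Q_lin] .

lemma PK_add: "PK (x + y) = PK x + PK y"
proof -
  have "(\<lambda>N. Q N (x + y)) \<longlonglongrightarrow> PK x + PK y"
    unfolding Q_add by (intro tendsto_add PK_lim)
  then show ?thesis using PK_lim LIMSEQ_unique by blast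
qed

lemma PK_scale: "PK (r *\<^sub>R x) = r *\<^sub>R PK x"
proof -
  have "(\<lambda>N. Q N (r *\<^sub>R x)) \<longlonglongrightarrow> r *\<^sub>R PK x"
    unfolding Q_scale by (intro tendsto_scaleR tendsto_const PK_lim)
  then show ?thesis using PK_lim LIMSEQ_unique by blast
qed

lemma PK_norm: "norm (PK x) \<le> norm x"
proof (rule LIMSEQ_le_const2)
  show "(\<lambda>N. norm (Q N x)) \<longlonglongrightarrow> norm (PK x)" by (intro tendsto_norm PK_lim)
  show "\<exists>N. \<forall>n\<ge>N. norm (Q n x) \<le> norm x" by (auto simp: Q_norm An_norm)
qed

lemma PK_bl: "bounded_linear PK"
  by (rule bounded_linear_intro[where K=1]) (auto simp: PK_add PK_scale PK_norm)

lemma PK_lin: "linear PK" using PK_bl bounded_linear.linear by blast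

lemma Vn_range_closed: "closed (range (V ^^ n))"
  using isom_closed_range[OF Vn_lin Vn_nrm] .

lemma K_closed: "closed K" unfolding K_def using Vn_range_closed by blast

lemma K_subspace: "subspace K"
  unfolding K_def by (rule subspace_Inter) (auto simp: linear_subspace_image Vn_lin)

lemma K_fix: "k \<in> K \<Longrightarrow> PK k = k"
proof -
  assume "k \<in> K"
  have "Q N k = k" for N
  proof -
    have "k \<in> range (V ^^ N)" using \<open>k \<in> K\<close> unfolding K_def by blast
    then obtain z where "k = (V ^^ N) z" by blast
    then show ?thesis using Q_fix by simp
  qed
  then have "(\<lambda>N. Q N k) \<longlonglongrightarrow> k" by simp
  then show ?thesis using PK_lim LIMSEQ_unique by blast
qed

lemma PK_in: "PK x \<in> K"
  unfolding K_def
proof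
  fix n
  have r: "\<And>N. Q (N + n) x \<in> range (V ^^ n)"
  proof -
    fix N
    have "Q (N + n) x = (V ^^ (n + N)) ((adj ^^ (N + n)) x)"
      by (simp add: Q_def add.commute)
    also have "\<dots> = (V ^^ n) ((V ^^ N) ((adj ^^ (N + n)) x))"
      by (simp only: funpow_add comp_apply)
    finally show "Q (N + n) x \<in> range (V ^^ n)" by simp
  qed
  have l: "(\<lambda>N. Q (N + n) x) \<longlonglongrightarrow> PK x" using LIMSEQ_ignore_initial_segment[OF PK_lim] .
  show "PK x \<in> range (V ^^ n)"
    using closed_sequentially[OF Vn_range_closed r l] .
qed

lemma PK_Vn_L: assumes "adj l = 0" shows "PK ((V ^^ n) l) = 0"
proof -
  have "Q (N + Suc n) ((V ^^ n) l) = 0" for N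
  proof -
    have "(adj ^^ (N + Suc n)) ((V ^^ n) l) = (adj ^^ Suc N) l"
      using An_Vn_ge[of n "N + Suc n" l] by simp
    then show ?thesis using An_ker[OF assms] by (simp add: Q_def linear_0[OF Vn_lin] linear_0[OF lin])
  qed
  then have "(\<lambda>N. Q (N + Suc n) ((V ^^ n) l)) \<longlonglongrightarrow> 0" by simp
  then have "(\<lambda>N. Q N ((V ^^ n) l)) \<longlonglongrightarrow> 0" by (rule LIMSEQ_offset)
  then show ?thesis using PK_lim LIMSEQ_unique by blast
qed

lemma PK_V: "PK (V x) = V (PK x)"
proof -
  have "Q (Suc N) (V x) = V (Q N x)" for N
    unfolding Q_def An_Suc adj_V by simp
  moreover have "(\<lambda>N. V (Q N x)) \<longlonglongrightarrow> V (PK x)"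
    using V_bl PK_lim by (rule bounded_linear.tendsto)
  ultimately have "(\<lambda>N. Q (Suc N) (V x)) \<longlonglongrightarrow> V (PK x)" by simp
  then have "(\<lambda>N. Q N (V x)) \<longlonglongrightarrow> V (PK x)" by (rule LIMSEQ_imp_Suc)
  then show ?thesis using PK_lim LIMSEQ_unique by blast
qed

lemma PK_comm:
  assumes T: "bounded_linear T" and TV: "\<And>x. T (V x) = V (T x)" and TA: "\<And>x. T (adj x) = adj (T x)"
  shows "PK (T x) = T (PK x)"
proof -
  have TVn: "T ((V ^^ n) y) = (V ^^ n) (T y)" for n y by (induction n) (auto simp: TV)
  have TAn: "T ((adj ^^ n) y) = (adj ^^ n) (T y)" for n y by (induction n) (auto simp: TA)
  have "Q N (T x) = T (Q N x)" for N by (simp add: Q_def TVn TAn)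
  moreover have "(\<lambda>N. T (Q N x)) \<longlonglongrightarrow> T (PK x)"
    using T PK_lim by (rule bounded_linear.tendsto)
  ultimately have "(\<lambda>N. Q N (T x)) \<longlonglongrightarrow> T (PK x)" by simp
  then show ?thesis using PK_lim LIMSEQ_unique by blast
qed

lemma P_comm:
  assumes T: "linear T" and TV: "\<And>x. T (V x) = V (T x)" and TA: "\<And>x. T (adj x) = adj (T x)"
  shows "P (T x) = T (P x)"
  by (simp add: P_def TV TA linear_diff[OF T])

lemma norm_sum_identity:
  "(\<lambda>n. (norm (P ((adj ^^ n) x)))\<^sup>2) sums ((norm x)\<^sup>2 - (norm (PK x))\<^sup>2)"
proof -
  have ps: "(\<Sum>n<N. (norm (P ((adj ^^ n) x)))\<^sup>2) = (norm x)\<^sup>2 - (norm ((adj ^^ N) x))\<^sup>2" for N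
  proof (induction N)
    case 0 then show ?case by simp
  next
    case (Suc N) then show ?case using a_step[of N x] by simp
  qed
  have "(\<lambda>N. (norm (Q N x))\<^sup>2) \<longlonglongrightarrow> (norm (PK x))\<^sup>2" by (intro tendsto_intros PK_lim)
  then have "(\<lambda>N. (norm ((adj ^^ N) x))\<^sup>2) \<longlonglongrightarrow> (norm (PK x))\<^sup>2"
    unfolding Q_norm .
  then have "(\<lambda>N. (norm x)\<^sup>2 - (norm ((adj ^^ N) x))\<^sup>2) \<longlonglongrightarrow> (norm x)\<^sup>2 - (norm (PK x))\<^sup>2"
    by (rule tendsto_diff[OF tendsto_const])
  then show ?thesis unfolding sums_def ps .
qed

lemma norm_identity:
  "(norm x)\<^sup>2 = (\<Sum>n. (norm (P ((adj ^^ n) x)))\<^sup>2) + (norm (PK x))\<^sup>2"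
  using sums_unique[OF norm_sum_identity[of x]] by simp

end


context isom begin

lemma PAm_bl: "bounded_linear (\<lambda>x. P ((adj ^^ m) x))"
  by (rule bounded_linear_compose[OF P_bl An_bl])

lemma Pm_Vn: assumes "adj l = 0"
  shows "P ((adj ^^ m) ((V ^^ n) l)) = (if n = m then l else 0)"
proof (cases "n = m")
  case True then show ?thesis using assms by (simp add: An_Vn P_def linear_0[OF lin])
next
  case False
  show ?thesis
  proof (cases "m < n")
    case True
    define j where "j = n - m - 1"
    have j: "n - m = Suc j" using True by (simp add: j_def)
    have "P ((adj ^^ m) ((V ^^ n) l)) = P ((V ^^ Suc j) l)" using An_Vn_le[of m n l] True j by simp
    also have "\<dots> = 0" by (simp add: P_V)
    finally show ?thesis using False by simp
  next
    case nl: False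
    then have "n < m" using False by simp
    define j where "j = m - n - 1"
    have j: "m - n = Suc j" using \<open>n < m\<close> by (simp add: j_def)
    have "P ((adj ^^ m) ((V ^^ n) l)) = P ((adj ^^ Suc j) l)" using An_Vn_ge[of n m l] \<open>n < m\<close> j by simp
    also have "\<dots> = 0" using An_ker[OF assms] linear_0[OF P_lin] by simp
    finally show ?thesis using False by simp
  qed
qed

lemma Pm_K: assumes "k \<in> K" shows "P ((adj ^^ m) k) = 0"
proof -
  have "k \<in> range (V ^^ Suc m)" using assms unfolding K_def by blast
  then obtain z where z: "k = (V ^^ Suc m) z" by blast
  have "(adj ^^ m) k = (V ^^ 1) z" using An_Vn_le[of m "Suc m" z] z by simp
  then show ?thesis by (simp add: P_V)
qed

lemma orth_Vn: assumes "adj a = 0" "adj b = 0" "n < m"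
  shows "(V ^^ n) a \<bullet> (V ^^ m) b = 0"
proof -
  define j where "j = m - n - 1"
  have j: "m = n + Suc j" using assms(3) by (simp add: j_def)
  have "(V ^^ m) b = (V ^^ n) (V ((V ^^ j) b))" by (simp only: j funpow_add comp_apply funpow.simps(2))
  then have "(V ^^ n) a \<bullet> (V ^^ m) b = a \<bullet> V ((V ^^ j) b)" by (simp add: Vn_inner)
  also have "\<dots> = 0" using adjI[of a "(V ^^ j) b"] assms(1) by simp
  finally show ?thesis .
qed

lemma norm_sum_orth: assumes f: "\<And>n. adj (f n) = 0"
  shows "(norm (\<Sum>n\<in>{N..<M}. (V ^^ n) (f n)))\<^sup>2 = (\<Sum>n\<in>{N..<M}. (norm (f n))\<^sup>2)"
proof (induction M)
  case 0 then show ?case by simp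
next
  case (Suc M)
  show ?case
  proof (cases "N \<le> M")
    case False then show ?thesis by simp
  next
    case True
    have o: "(\<Sum>n\<in>{N..<M}. (V ^^ n) (f n)) \<bullet> (V ^^ M) (f M) = 0"
      unfolding inner_sum_left by (rule sum.neutral) (auto intro: orth_Vn f)
    have "(norm (\<Sum>n\<in>{N..<Suc M}. (V ^^ n) (f n)))\<^sup>2
        = (norm ((\<Sum>n\<in>{N..<M}. (V ^^ n) (f n)) + (V ^^ M) (f M)))\<^sup>2"
      using True by (simp add: atLeastLessThanSuc add.commute)
    also have "\<dots> = (norm (\<Sum>n\<in>{N..<M}. (V ^^ n) (f n)))\<^sup>2 + (norm ((V ^^ M) (f M)))\<^sup>2"
      using o by (intro norm_add_Pythagorean) (simp add: orthogonal_def)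
    also have "\<dots> = (\<Sum>n\<in>{N..<Suc M}. (norm (f n))\<^sup>2)"
      using True Suc.IH by (simp add: atLeastLessThanSuc Vn_nrm add.commute)
    finally show ?thesis .
  qed
qed

lemma surj_wold:
  assumes f: "\<And>n. adj (f n) = 0" and sf: "summable (\<lambda>n. (norm (f n))\<^sup>2)" and k: "k \<in> K"
  shows "\<exists>x. (\<forall>m. P ((adj ^^ m) x) = f m) \<and> PK x = k"
proof -
  define s where "s N = (\<Sum>n\<in>{0..<N}. (V ^^ n) (f n))" for N
  have "Cauchy s"
  proof (rule metric_CauchyI)
    fix e :: real assume e: "e > 0"
    have e2: "e\<^sup>2 > 0" using e by simp
    have "\<forall>e>0. \<exists>N. \<forall>m\<ge>N. \<forall>n. norm (\<Sum>i\<in>{m..<n}. (norm (f i))\<^sup>2) < e"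
      using sf unfolding summable_Cauchy .
    then obtain M where M: "\<forall>m\<ge>M. \<forall>n. norm (\<Sum>i\<in>{m..<n}. (norm (f i))\<^sup>2) < e\<^sup>2"
      using e2 by blast
    have d: "dist (s m) (s n) < e" if "m \<ge> M" "n \<ge> M" "m \<le> n" for m n
    proof -
      have sd: "s n - s m = (\<Sum>i\<in>{m..<n}. (V ^^ i) (f i))"
        unfolding s_def using sum_diff_nat_ivl[of 0 m n] that by simp
      have "dist (s m) (s n) = norm (s n - s m)" by (metis dist_commute dist_norm)
      then have "(dist (s m) (s n))\<^sup>2 = (norm (\<Sum>i\<in>{m..<n}. (V ^^ i) (f i)))\<^sup>2"
        by (simp only: sd)
      also have "\<dots> = (\<Sum>i\<in>{m..<n}. (norm (f i))\<^sup>2)" by (rule norm_sum_orth[OF f])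
      also have "\<dots> < e\<^sup>2"
      proof -
        have "(\<Sum>i\<in>{m..<n}. (norm (f i))\<^sup>2) \<ge> 0" by (simp add: sum_nonneg)
        moreover have "norm (\<Sum>i\<in>{m..<n}. (norm (f i))\<^sup>2) < e\<^sup>2" using M that by blast
        ultimately show ?thesis by simp
      qed
      finally show ?thesis using e by (simp add: power_less_imp_less_base)
    qed
    have "dist (s m) (s n) < e" if "m \<ge> M" "n \<ge> M" for m n
    proof (cases "m \<le> n")
      case True then show ?thesis using d[of m n] that by blast
    next
      case False then have "dist (s n) (s m) < e" using d[of n m] that by simp
      then show ?thesis by (simp add: dist_commute)
    qed
    then show "\<exists>M. \<forall>m\<ge>M. \<forall>n\<ge>M. dist (s m) (s n) < e" by blast
  qed
  then obtain y where y: "s \<longlonglongrightarrow> y" using Cauchy_convergent_iff convergent_def by blast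
  have Py: "P ((adj ^^ m) y) = f m" for m
  proof -
    have lin: "linear (\<lambda>x. P ((adj ^^ m) x))" using PAm_bl bounded_linear.linear by blast
    have "P ((adj ^^ m) (s N)) = (\<Sum>n\<in>{0..<N}. (if n = m then f n else 0))" for N
      unfolding s_def linear_sum[OF lin] using Pm_Vn[OF f] by simp
    then have "P ((adj ^^ m) (s N)) = (if m < N then f m else 0)" for N
      by (simp add: sum.delta)
    then have "(\<lambda>N. P ((adj ^^ m) (s (N + Suc m)))) \<longlonglongrightarrow> f m" by simp
    then have l1: "(\<lambda>N. P ((adj ^^ m) (s N))) \<longlonglongrightarrow> f m" by (rule LIMSEQ_offset)
    have l2: "(\<lambda>N. P ((adj ^^ m) (s N))) \<longlonglongrightarrow> P ((adj ^^ m) y)"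
      using PAm_bl y by (rule bounded_linear.tendsto)
    show ?thesis using LIMSEQ_unique[OF l2 l1] .
  qed
  have PKy: "PK y = 0"
  proof -
    have "PK (s N) = 0" for N
      unfolding s_def linear_sum[OF PK_lin] using PK_Vn_L[OF f] by simp
    then have l1: "(\<lambda>N. PK (s N)) \<longlonglongrightarrow> 0" by simp
    have l2: "(\<lambda>N. PK (s N)) \<longlonglongrightarrow> PK y"
      using PK_bl y by (rule bounded_linear.tendsto)
    show ?thesis using LIMSEQ_unique[OF l2 l1] .
  qed
  have "P ((adj ^^ m) (y + k)) = f m" for m
    using Py Pm_K[OF k] by (simp add: linear_add[OF An_lin] linear_add[OF P_lin])
  moreover have "PK (y + k) = k" using PKy K_fix[OF k] by (simp add: PK_add)
  ultimately show ?thesis by blast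
qed

end


theorem theorem5p4:
  fixes J V1 V2 :: "'h::{real_inner,complete_space} \<Rightarrow> 'h"
  assumes "cstruct J"
    and "c_isometry J V1" and "c_isometry J V2"
    and "V1 \<circ> V2 = V2 \<circ> V1"
    and "range V1 = range V2"
  shows "\<exists>L K W W1 W2 U.
           csubspace J L \<and> csubspace J K \<and>
           unitary_on J L W \<and> unitary_on J K W1 \<and> unitary_on J K W2 \<and>
           (\<forall>x\<in>K. W1 (W2 x) = W2 (W1 x)) \<and>
           unitary_onto J L K U \<and>
           (\<forall>x. U (V1 x) = (tshift id (fst (U x)), W1 (snd (U x)))) \<and>
           (\<forall>x. U (V2 x) = (tshift W (fst (U x)), W2 (snd (U x))))"
proof -
  have Jl: "linear J" and JJ: "\<And>x. J (J x) = - x" and Jn: "\<And>x. norm (J x) = norm x"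
    using assms(1) unfolding cstruct_def by auto
  have V1l: "linear V1" and V1J: "\<And>x. V1 (J x) = J (V1 x)" and V1n: "\<And>x. norm (V1 x) = norm x"
    using assms(2) unfolding c_isometry_def by auto
  have V2l: "linear V2" and V2J: "\<And>x. V2 (J x) = J (V2 x)" and V2n: "\<And>x. norm (V2 x) = norm x"
    using assms(3) unfolding c_isometry_def by auto
  have comm: "\<And>x. V1 (V2 x) = V2 (V1 x)" using assms(4) by (metis comp_apply)
  interpret V1: isom V1 using V1l V1n by (rule isom.intro)
  define A where "A = V1.adj"
  define X where "X x = A (V2 x)" for x
  have Jbl: "bounded_linear J" using isom_bl[OF Jl Jn] .
  have Jinner: "J x \<bullet> J y = x \<bullet> y" for x y using isom_inner[OF Jl Jn] .
  have Jskew: "J x \<bullet> y = - (x \<bullet> J y)" for x y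
  proof -
    have "J x \<bullet> y = J (J x) \<bullet> J y" by (rule Jinner[symmetric])
    then show ?thesis by (simp add: JJ)
  qed
  have AJ: "A (J y) = J (A y)" for y
  proof (rule inner_ext)
    fix z
    have "A (J y) \<bullet> z = J y \<bullet> V1 z" by (simp add: A_def V1.adjI)
    also have "\<dots> = - (y \<bullet> V1 (J z))" by (simp add: Jskew V1J)
    also have "\<dots> = - (A y \<bullet> J z)" by (simp add: A_def V1.adjI)
    also have "\<dots> = J (A y) \<bullet> z" by (simp add: Jskew)
    finally show "A (J y) \<bullet> z = J (A y) \<bullet> z" .
  qed
  have Al: "linear A" unfolding A_def by (rule V1.adj_lin)
  have Abl: "bounded_linear A" unfolding A_def by (rule V1.adj_bl)
  have AV1: "A (V1 x) = x" for x unfolding A_def by (rule V1.adj_V)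
  have V1X: "V1 (X x) = V2 x" for x
  proof -
    have "V2 x \<in> range V1" using assms(5) by auto
    then obtain w where "V2 x = V1 w" by auto
    then show ?thesis by (simp add: X_def AV1)
  qed
  have Xl: "linear X" unfolding X_def[abs_def] using linear_compose[OF V2l Al] by (simp add: o_def)
  have Xn: "norm (X x) = norm x" for x using V1n[of "X x"] by (simp add: V1X V2n)
  have Xbl: "bounded_linear X" using isom_bl[OF Xl Xn] .
  have Xinner: "X x \<bullet> X y = x \<bullet> y" for x y using isom_inner[OF Xl Xn] .
  have Xinj: "X x = X y \<Longrightarrow> x = y" for x y using isom_inj[OF Xl Xn] .
  have XV1: "X (V1 x) = V1 (X x)" for x
  proof -
    have "V1 (X (V1 x)) = V1 (V1 (X x))" by (simp add: V1X comm)
    then show ?thesis by (rule V1.V_inj)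
  qed
  have Xsurj: "\<exists>z. X z = y" for y
  proof -
    have "V1 y \<in> range V2" using assms(5) by auto
    then obtain z where "V1 y = V2 z" by auto
    then have "V1 y = V1 (X z)" by (simp add: V1X)
    then show ?thesis using V1.V_inj by metis
  qed
  have XA: "X (A y) = A (X y)" for y
  proof (rule inner_ext)
    fix w
    obtain u where u: "w = X u" using Xsurj by metis
    have "X (A y) \<bullet> X u = y \<bullet> V1 u" by (simp add: Xinner A_def V1.adjI)
    moreover have "A (X y) \<bullet> X u = y \<bullet> V1 u"
      by (simp add: A_def V1.adjI XV1[symmetric] Xinner)
    ultimately show "X (A y) \<bullet> w = A (X y) \<bullet> w" by (simp add: u)
  qed
  have XJ: "X (J x) = J (X x)" for x by (simp add: X_def V2J AJ)
  have AnJ: "(A ^^ n) (J x) = J ((A ^^ n) x)" for n x by (induction n) (auto simp: AJ)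
  have AnX: "(A ^^ n) (X x) = X ((A ^^ n) x)" for n x by (induction n) (auto simp: XA)
  have V1nJ: "(V1 ^^ n) (J x) = J ((V1 ^^ n) x)" for n x by (induction n) (auto simp: V1J)
  have V1nX: "(V1 ^^ n) (X x) = X ((V1 ^^ n) x)" for n x by (induction n) (auto simp: XV1)
  define L where "L = {l. A l = 0}"
  define K where "K = V1.K"
  define U where "U x = ((\<lambda>n. V1.P ((A ^^ n) x)), V1.PK x)" for x
  have cL: "csubspace J L"
    unfolding csubspace_def
  proof (intro conjI)
    show "subspace L" unfolding L_def by (rule linear_subspace_kernel[OF Al])
    show "closed L" unfolding L_def
      by (rule closed_Collect_eq) (auto intro: linear_continuous_on Abl)
    show "\<forall>x\<in>L. J x \<in> L" unfolding L_def by (auto simp: AJ linear_0[OF Jl])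
  qed
  have cK: "csubspace J K"
    unfolding csubspace_def K_def
  proof (intro conjI)
    show "subspace V1.K" by (rule V1.K_subspace)
    show "closed V1.K" by (rule V1.K_closed)
    show "\<forall>x\<in>V1.K. J x \<in> V1.K"
    proof
      fix x assume "x \<in> V1.K"
      then have "\<forall>n. x \<in> range (V1 ^^ n)" unfolding V1.K_def by blast
      have "J x \<in> range (V1 ^^ n)" for n
      proof -
        obtain z where "x = (V1 ^^ n) z" using \<open>\<forall>n. x \<in> range (V1 ^^ n)\<close> by blast
        then have "J x = (V1 ^^ n) (J z)" by (simp add: V1nJ)
        then show ?thesis by simp
      qed
      then show "J x \<in> V1.K" unfolding V1.K_def by blast
    qed
  qed
  have XL: "X ` L = L"
  proof
    show "X ` L \<subseteq> L" unfolding L_def by (auto simp: XA[symmetric] linear_0[OF Xl])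
    show "L \<subseteq> X ` L"
    proof
      fix l assume l: "l \<in> L"
      obtain z where z: "X z = l" using Xsurj by metis
      have "X (A z) = X 0" using l z XA linear_0[OF Xl] unfolding L_def by simp
      then have "A z = 0" by (rule Xinj)
      then show "l \<in> X ` L" using z unfolding L_def by blast
    qed
  qed
  have V1K: "V1 ` K = K"
  proof
    show "V1 ` K \<subseteq> K"
    proof
      fix y assume "y \<in> V1 ` K"
      then obtain k where k: "k \<in> K" "y = V1 k" by blast
      have "y \<in> range (V1 ^^ n)" for n
      proof -
        obtain z where "k = (V1 ^^ n) z" using k unfolding K_def V1.K_def by blast
        then have "y = (V1 ^^ n) (V1 z)" using k by (simp add: funpow_swap1)
        then show ?thesis by simp
      qed
      then show "y \<in> K" unfolding K_def V1.K_def by blast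
    qed
    show "K \<subseteq> V1 ` K"
    proof
      fix k assume k: "k \<in> K"
      have "k \<in> range (V1 ^^ Suc 0)" using k unfolding K_def V1.K_def by blast
      then obtain z where z: "k = V1 z" by auto
      have "z \<in> range (V1 ^^ n)" for n
      proof -
        obtain w where "k = (V1 ^^ Suc n) w" using k unfolding K_def V1.K_def by blast
        then have "V1 z = V1 ((V1 ^^ n) w)" using z by simp
        then have "z = (V1 ^^ n) w" by (rule V1.V_inj)
        then show ?thesis by simp
      qed
      then have "z \<in> K" unfolding K_def V1.K_def by blast
      then show "k \<in> V1 ` K" using z by blast
    qed
  qed
  have XK: "X ` K = K"
  proof
    show "X ` K \<subseteq> K"
    proof
      fix y assume "y \<in> X ` K"
      then obtain k where k: "k \<in> K" "y = X k" by blast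
      have "y \<in> range (V1 ^^ n)" for n
      proof -
        obtain z where "k = (V1 ^^ n) z" using k unfolding K_def V1.K_def by blast
        then have "y = (V1 ^^ n) (X z)" using k by (simp add: V1nX)
        then show ?thesis by simp
      qed
      then show "y \<in> K" unfolding K_def V1.K_def by blast
    qed
    show "K \<subseteq> X ` K"
    proof
      fix k assume k: "k \<in> K"
      obtain z where z: "X z = k" using Xsurj by metis
      have "z \<in> range (V1 ^^ n)" for n
      proof -
        obtain w where w: "k = (V1 ^^ n) w" using k unfolding K_def V1.K_def by blast
        obtain w' where w': "X w' = w" using Xsurj by metis
        have "X z = X ((V1 ^^ n) w')" using z w w' by (simp add: V1nX[symmetric])
        then have "z = (V1 ^^ n) w'" by (rule Xinj)
        then show ?thesis by simp
      qed
      then have "z \<in> K" unfolding K_def V1.K_def by blast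
      then show "k \<in> X ` K" using z by blast
    qed
  qed
  have V2K: "V2 ` K = K"
  proof -
    have "V2 ` K = V1 ` (X ` K)" by (auto simp: V1X image_image)
    then show ?thesis using XK V1K by simp
  qed
  have uW: "unitary_on J L X"
    unfolding unitary_on_def using XL
    by (simp add: linear_add[OF Xl] linear_scale[OF Xl] XJ Xn)
  have uW1: "unitary_on J K V1"
    unfolding unitary_on_def using V1K
    by (simp add: linear_add[OF V1l] linear_scale[OF V1l] V1J V1n)
  have uW2: "unitary_on J K V2"
    unfolding unitary_on_def using V2K
    by (simp add: linear_add[OF V2l] linear_scale[OF V2l] V2J V2n)
  have cW: "\<forall>x\<in>K. V1 (V2 x) = V2 (V1 x)" using comm by simp
  have AJ': "J (V1.adj y) = V1.adj (J y)" for y using AJ[of y] unfolding A_def by simp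
  have XA': "X (V1.adj y) = V1.adj (X y)" for y using XA[of y] unfolding A_def by simp
  have PJ: "V1.P (J y) = J (V1.P y)" for y
    by (rule V1.P_comm[OF Jl V1J[symmetric] AJ'])
  have PX: "V1.P (X y) = X (V1.P y)" for y
    by (rule V1.P_comm[OF Xl XV1 XA'])
  have PKJ: "V1.PK (J y) = J (V1.PK y)" for y
    by (rule V1.PK_comm[OF Jbl V1J[symmetric] AJ'])
  have PKX: "V1.PK (X y) = X (V1.PK y)" for y
    by (rule V1.PK_comm[OF Xbl XV1 XA'])
  have uU: "unitary_onto J L K U"
    unfolding unitary_onto_def
  proof (intro conjI allI)
    fix n show "linear (\<lambda>x. fst (U x) n)"
      unfolding U_def A_def fst_conv by (rule bounded_linear.linear[OF V1.PAm_bl])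
  next
    show "linear (\<lambda>x. snd (U x))" unfolding U_def snd_conv by (rule V1.PK_lin)
  next
    fix x show "U (J x) = ((\<lambda>n. J (fst (U x) n)), J (snd (U x)))"
      unfolding U_def by (simp add: AnJ PJ PKJ)
  next
    fix x show "(norm x)\<^sup>2 = (\<Sum>n. (norm (fst (U x) n))\<^sup>2) + (norm (snd (U x)))\<^sup>2"
      unfolding U_def A_def fst_conv snd_conv by (rule V1.norm_identity)
  next
    show "range U = hardy L \<times> K"
    proof
      show "range U \<subseteq> hardy L \<times> K"
      proof
        fix y assume "y \<in> range U"
        then obtain x where x: "y = U x" by blast
        have "\<forall>n. V1.P ((A ^^ n) x) \<in> L" unfolding L_def A_def by (simp add: V1.adj_P)
        moreover have "summable (\<lambda>n. (norm (V1.P ((A ^^ n) x)))\<^sup>2)"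
          unfolding A_def using V1.norm_sum_identity sums_summable by blast
        moreover have "V1.PK x \<in> K" unfolding K_def by (rule V1.PK_in)
        ultimately show "y \<in> hardy L \<times> K" unfolding x U_def hardy_def by simp
      qed
      show "hardy L \<times> K \<subseteq> range U"
      proof
        fix y assume "y \<in> hardy L \<times> K"
        then obtain f k where y: "y = (f, k)" and f: "\<And>n. A (f n) = 0"
          and sf: "summable (\<lambda>n. (norm (f n))\<^sup>2)" and k: "k \<in> V1.K"
          unfolding hardy_def L_def K_def by auto
        obtain x where "\<forall>m. V1.P ((V1.adj ^^ m) x) = f m" "V1.PK x = k"
          using V1.surj_wold[of f k] f sf k unfolding A_def by blast
        then have "U x = y" unfolding U_def A_def y by auto
        then show "y \<in> range U" by blast
      qed
    qed
  qed
  have eV1: "\<forall>x. U (V1 x) = (tshift id (fst (U x)), V1 (snd (U x)))"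
  proof
    fix x
    have "(\<lambda>n. V1.P ((A ^^ n) (V1 x))) = tshift id (\<lambda>n. V1.P ((A ^^ n) x))"
    proof
      fix n show "V1.P ((A ^^ n) (V1 x)) = tshift id (\<lambda>n. V1.P ((A ^^ n) x)) n"
      proof (cases n)
        case 0 then show ?thesis by (simp add: tshift_def V1.P_V)
      next
        case (Suc m)
        have "(A ^^ Suc m) (V1 x) = (A ^^ m) x" by (simp only: A_def V1.An_Suc V1.adj_V)
        then show ?thesis using Suc by (simp add: tshift_def)
      qed
    qed
    then show "U (V1 x) = (tshift id (fst (U x)), V1 (snd (U x)))"
      unfolding U_def by (simp add: V1.PK_V)
  qed
  have eV2: "\<forall>x. U (V2 x) = (tshift X (fst (U x)), V2 (snd (U x)))"
  proof
    fix x
    have "(\<lambda>n. V1.P ((A ^^ n) (V2 x))) = tshift X (\<lambda>n. V1.P ((A ^^ n) x))"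
    proof
      fix n show "V1.P ((A ^^ n) (V2 x)) = tshift X (\<lambda>n. V1.P ((A ^^ n) x)) n"
      proof (cases n)
        case 0 then show ?thesis by (simp add: tshift_def V1.P_V V1X[symmetric])
      next
        case (Suc m)
        have "(A ^^ Suc m) (V2 x) = (A ^^ m) (X x)"
          unfolding V1X[symmetric] by (simp only: A_def V1.An_Suc V1.adj_V)
        also have "\<dots> = X ((A ^^ m) x)" by (rule AnX)
        finally show ?thesis using Suc by (simp add: tshift_def PX)
      qed
    qed
    moreover have "V1.PK (V2 x) = V2 (V1.PK x)"
    proof -
      have "V1.PK (V2 x) = V1.PK (V1 (X x))" by (simp only: V1X)
      also have "\<dots> = V1 (V1.PK (X x))" by (rule V1.PK_V)
      also have "\<dots> = V1 (X (V1.PK x))" by (simp only: PKX)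
      also have "\<dots> = V2 (V1.PK x)" by (rule V1X)
      finally show ?thesis .
    qed
    ultimately show "U (V2 x) = (tshift X (fst (U x)), V2 (snd (U x)))"
      unfolding U_def by simp
  qed
  show ?thesis
    apply (rule exI[where x = L], rule exI[where x = K], rule exI[where x = X],
        rule exI[where x = V1], rule exI[where x = V2], rule exI[where x = U])
    using cL cK uW uW1 uW2 cW uU eV1 eV2 by (intro conjI)
qed


end
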